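(* Let $N\geq1$, $\delta=T/N$. Let $v_h^0$ be the greatest $v\in\mathcal W_h$ with $v\leq\phi$, and for $t=0,\delta,\dots,T-\delta$ let $v_h^{t+\delta}$ be the greatest $v\in\mathcal W_h$ with $\langle z_j,v\rangle\leq\langle z_j,S^\delta v_h^t\rangle$ for all $1\leq j\leq q$. Then for every $t\in\{0,\delta,\dots,T\}$ there exists a greatest $\lambda^t\in\overline{\mathbb{R}}^p$ with $v_h^t=W_h\lambda^t$, and these vectors satisfy $\lambda^0=W_h\backslash\phi$ and, for $t=0,\dots,T-\delta$ and $1\leq i\leq p$, \[ \lambda^{t+\delta}_i=\min_{1\leq j\leq q}\Big(\langle z_j,w_i\rangle\backslash\langle z_j,S^\delta(W_h\lambda^t)\rangle\Big). \]
   Context: $X\subseteq\mathbb{R}^n$, $U\subseteq\mathbb{R}^m$, $\ell:X\times U\to\mathbb R$, $f:X\times U\to\mathbb{R}^n$, $T>0$, $\phi:X\to\mathbb{R}\cup\{-\infty\}$; $S^\delta g(x)=\sup\{\int_0^\delta\ell(\mathbf x(s),\mathbf u(s))ds+g(\mathbf x(\delta))\}$ over measurable $\mathbf u:[0,\delta]\to U$ and absolutely continuous $\mathbf x:[0,\delta]\to X$ with $\dot{\mathbf x}=f(\mathbf x,\mathbf u)$ a.e., $\mathbf x(0)=x$. Arithmetic in $\overline{\mathbb R}=\mathbb{R}\cup\{\pm\infty\}$ with $-\infty$ absorbing for $+$; $a\backslash b=\max\{\lambda\in\overline{\mathbb{R}}:a+\lambda\leq b\}$. Finite elements $w_1,\dots,w_p$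 and test functions $z_1,\dots,z_q$ are functions $X\to\mathbb{R}\cup\{-\infty\}$. $\langle u,v\rangle=\sup_{x\in X}(u(x)+v(x))$; $W_h\lambda=\sup_i(w_i+\lambda_i)$; $\mathcal W_h=\{W_h\lambda:\lambda\in\overline{\mathbb R}^p\}$; $(W_h\backslash g)_i=\inf_{x\in X}(w_i(x)\backslash g(x))$. Functions are ordered pointwise. *)

theory Defs
  imports "HOL-Analysis.Analysis" "HOL-Library.Extended_Real"
begin

definition madd :: "ereal \<Rightarrow> ereal \<Rightarrow> ereal" where
  "madd a b = (if a = -\<infinity> \<or> b = -\<infinity> then -\<infinity> else a + b)"

definition resid :: "ereal \<Rightarrow> ereal \<Rightarrow> ereal" where
  "resid a b = (GREATEST l. madd a l \<le> b)"

definition abs_cont_on :: "real \<Rightarrow> real \<Rightarrow> (real \<Rightarrow> 'v::real_normed_vector) \<Rightarrow> bool" where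
  "abs_cont_on a b y \<longleftrightarrow>
     (\<forall>e>0. \<exists>d>0. \<forall>(n::nat) (s::nat \<Rightarrow> real) (t::nat \<Rightarrow> real).
        (\<forall>k<n. a \<le> s k \<and> s k \<le> t k \<and> t k \<le> b)
        \<and> (\<forall>i<n. \<forall>j<n. i \<noteq> j \<longrightarrow> t i \<le> s j \<or> t j \<le> s i)
        \<and> (\<Sum>k<n. t k - s k) < d
        \<longrightarrow> (\<Sum>k<n. norm (y (t k) - y (s k))) < e)"

definition admissible ::
  "('n::euclidean_space) set \<Rightarrow> ('m::euclidean_space) set \<Rightarrow> ('n \<Rightarrow> 'm \<Rightarrow> 'n)
   \<Rightarrow> ('n \<Rightarrow> 'm \<Rightarrow> real) \<Rightarrow> real \<Rightarrow> 'n \<Rightarrow> (real \<Rightarrow> 'm) \<Rightarrow> (real \<Rightarrow> 'n) \<Rightarrow> bool" where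
  "admissible X U f l \<delta> x u y \<longleftrightarrow>
     u \<in> borel_measurable (restrict_space lborel {0..\<delta>})
     \<and> (\<forall>s\<in>{0..\<delta>}. u s \<in> U)
     \<and> abs_cont_on 0 \<delta> y
     \<and> (\<forall>s\<in>{0..\<delta>}. y s \<in> X)
     \<and> (AE s in lborel. s \<in> {0..\<delta>} \<longrightarrow> (y has_vector_derivative f (y s) (u s)) (at s within {0..\<delta>}))
     \<and> y 0 = x
     \<and> set_integrable lborel {0..\<delta>} (\<lambda>s. l (y s) (u s))"

definition Ssg ::
  "('n::euclidean_space) set \<Rightarrow> ('m::euclidean_space) set \<Rightarrow> ('n \<Rightarrow> 'm \<Rightarrow> 'n)
   \<Rightarrow> ('n \<Rightarrow> 'm \<Rightarrow> real) \<Rightarrow> real \<Rightarrow> ('n \<Rightarrow> ereal) \<Rightarrow> 'n \<Rightarrow> ereal" where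
  "Ssg X U f l \<delta> g x = Sup {ereal (LINT s:{0..\<delta>}|lborel. l (y s) (u s)) + g (y \<delta>) | u y.
        admissible X U f l \<delta> x u y}"

definition pairing :: "'n set \<Rightarrow> ('n \<Rightarrow> ereal) \<Rightarrow> ('n \<Rightarrow> ereal) \<Rightarrow> ereal" where
  "pairing X u v = (SUP x\<in>X. madd (u x) (v x))"

definition Wh :: "('p \<Rightarrow> 'n \<Rightarrow> ereal) \<Rightarrow> ('p \<Rightarrow> ereal) \<Rightarrow> 'n \<Rightarrow> ereal" where
  "Wh w lam x = (SUP i. madd (w i x) (lam i))"

definition Wspace :: "('p \<Rightarrow> 'n \<Rightarrow> ereal) \<Rightarrow> ('n \<Rightarrow> ereal) set" where
  "Wspace w = range (Wh w)"

definition Wres :: "'n set \<Rightarrow> ('p \<Rightarrow> 'n \<Rightarrow> ereal) \<Rightarrow> ('n \<Rightarrow> ereal) \<Rightarrow> 'p \<Rightarrow> ereal" where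
  "Wres X w g i = (INF x\<in>X. resid (w i x) (g x))"

end

theory Submission
  imports Defs
begin
lemma madd_comm: "madd a b = madd b a"
  unfolding madd_def by (auto simp: add.commute)
lemma madd_assoc: "madd (madd a b) c = madd a (madd b c)"
  unfolding madd_def by (auto simp: add.assoc)
lemma resid_ex: "\<exists>g. madd a g \<le> b \<and> (\<forall>l. madd a l \<le> b \<longleftrightarrow> l \<le> g)"
proof (cases a)
  case (real r)
  show ?thesis
  proof (intro exI[of _ "b - a"] conjI allI)
    show "madd a (b - a) \<le> b" using real by (cases b) (auto simp: madd_def)
    fix l show "madd a l \<le> b \<longleftrightarrow> l \<le> b - a" using real
      by (cases b; cases l) (auto simp: madd_def add.commute le_diff_eq)
  qed
next
  case PInf
  show ?thesis
  proof (intro exI[of _ "if b = \<infinity> then \<infinity> else -\<infinity>"] conjI allI)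
    show "madd a (if b = \<infinity> then \<infinity> else -\<infinity>) \<le> b" using PInf by (auto simp: madd_def)
    fix l show "madd a l \<le> b \<longleftrightarrow> l \<le> (if b = \<infinity> then \<infinity> else -\<infinity>)" using PInf
      by (cases b; cases l) (auto simp: madd_def)
  qed
next
  case MInf
  then show ?thesis by (intro exI[of _ \<infinity>]) (auto simp: madd_def)
qed
lemma resid_iff: "madd a l \<le> b \<longleftrightarrow> l \<le> resid a b"
proof -
  obtain g where g: "madd a g \<le> b" "\<And>l. madd a l \<le> b \<longleftrightarrow> l \<le> g" using resid_ex by blast
  have "resid a b = g" unfolding resid_def by (rule Greatest_equality) (use g in auto)
  then show ?thesis using g by simp
qed
lemma madd_SUP_le: "madd a (SUP i\<in>I. b i) \<le> c \<longleftrightarrow> (\<forall>i\<in>I. madd a (b i) \<le> c)"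
  by (simp add: resid_iff SUP_le_iff)
lemma madd_SUP_le': "madd (SUP i\<in>I. b i) a \<le> c \<longleftrightarrow> (\<forall>i\<in>I. madd (b i) a \<le> c)"
  by (simp add: madd_comm[of _ a] madd_SUP_le)
lemma madd_mono: "a \<le> a' \<Longrightarrow> b \<le> b' \<Longrightarrow> madd a b \<le> madd a' b'"
  unfolding madd_def by (auto intro: add_mono)
lemma Wh_mono: "lam \<le> mu \<Longrightarrow> Wh w lam \<le> Wh w mu"
  unfolding Wh_def le_fun_def by (auto intro!: SUP_mono madd_mono)
lemma Wh_le_iff:
  assumes "\<forall>i x. x \<notin> X \<longrightarrow> w i x = -\<infinity>"
  shows "Wh w lam \<le> g \<longleftrightarrow> lam \<le> Wres X w g"
proof -
  have "Wh w lam \<le> g \<longleftrightarrow> (\<forall>x i. madd (w i x) (lam i) \<le> g x)"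
    unfolding Wh_def le_fun_def by (simp add: SUP_le_iff)
  also have "\<dots> \<longleftrightarrow> (\<forall>x\<in>X. \<forall>i. madd (w i x) (lam i) \<le> g x)"
    using assms by (auto simp: madd_def)
  also have "\<dots> \<longleftrightarrow> lam \<le> Wres X w g"
    unfolding Wres_def le_fun_def by (auto simp: le_INF_iff resid_iff)
  finally show ?thesis .
qed
lemma pairing_Wh_le:
  "pairing X z (Wh w lam) \<le> c \<longleftrightarrow> (\<forall>i. lam i \<le> resid (pairing X z (w i)) c)"
proof -
  have "pairing X z (Wh w lam) \<le> c \<longleftrightarrow> (\<forall>x\<in>X. \<forall>i. madd (madd (z x) (w i x)) (lam i) \<le> c)"
    unfolding pairing_def Wh_def by (simp add: SUP_le_iff madd_SUP_le madd_assoc)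
  also have "\<dots> \<longleftrightarrow> (\<forall>i. madd (pairing X z (w i)) (lam i) \<le> c)"
    unfolding pairing_def by (auto simp: madd_SUP_le')
  finally show ?thesis by (simp add: resid_iff)
qed
lemma greatest_gen:
  assumes "\<And>lam. P (Wh w lam) \<longleftrightarrow> lam \<le> mu"
  shows "(GREATEST u. u \<in> Wspace w \<and> P u) = Wh w mu"
    and "(GREATEST lam. Wh w mu = Wh w lam) = mu"
    and "\<forall>lam'. Wh w mu = Wh w lam' \<longrightarrow> lam' \<le> mu"
proof -
  show "(GREATEST u. u \<in> Wspace w \<and> P u) = Wh w mu"
    by (rule Greatest_equality) (use assms in \<open>auto simp: Wspace_def intro: Wh_mono\<close>)
  show 3: "\<forall>lam'. Wh w mu = Wh w lam' \<longrightarrow> lam' \<le> mu"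
    using assms[of mu] assms by (metis order_refl)
  show "(GREATEST lam. Wh w mu = Wh w lam) = mu"
    by (rule Greatest_equality) (use 3 in auto)
qed

theorem proposition3p2:
  fixes X :: "('n::euclidean_space) set" and U :: "('m::euclidean_space) set"
    and l :: "'n \<Rightarrow> 'm \<Rightarrow> real" and f :: "'n \<Rightarrow> 'm \<Rightarrow> 'n"
    and T :: real and N :: nat and \<delta> :: real
    and \<phi> :: "'n \<Rightarrow> ereal"
    and w :: "'p::finite \<Rightarrow> 'n \<Rightarrow> ereal" and z :: "'q::finite \<Rightarrow> 'n \<Rightarrow> ereal"
    and v :: "nat \<Rightarrow> 'n \<Rightarrow> ereal"
  assumes "T > 0" and "N \<ge> 1" and "\<delta> = T / real N"
    and "\<forall>x. \<phi> x \<noteq> \<infinity>" and "\<forall>i x. w i x \<noteq> \<infinity>" and "\<forall>j x. z j x \<noteq> \<infinity>"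
    and "\<forall>x. x \<notin> X \<longrightarrow> \<phi> x = -\<infinity>"
    and "\<forall>i x. x \<notin> X \<longrightarrow> w i x = -\<infinity>"
    and "\<forall>j x. x \<notin> X \<longrightarrow> z j x = -\<infinity>"
    and "v 0 = (GREATEST u. u \<in> Wspace w \<and> u \<le> \<phi>)"
    and "\<forall>k<N. v (Suc k) = (GREATEST u. u \<in> Wspace w \<and>
            (\<forall>j. pairing X (z j) u \<le> pairing X (z j) (Ssg X U f l \<delta> (v k))))"
  shows "(\<forall>k\<le>N. \<exists>lam. v k = Wh w lam \<and> (\<forall>lam'. v k = Wh w lam' \<longrightarrow> lam' \<le> lam))
    \<and> (GREATEST lam. v 0 = Wh w lam) = Wres X w \<phi>
    \<and> (\<forall>k<N. \<forall>i. (GREATEST lam. v (Suc k) = Wh w lam) i =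
          Min (range (\<lambda>j. resid (pairing X (z j) (w i))
                 (pairing X (z j) (Ssg X U f l \<delta> (Wh w (GREATEST lam. v k = Wh w lam)))))))"
proof -
  define mu where "mu k = (\<lambda>i. Min (range (\<lambda>j. resid (pairing X (z j) (w i))
                 (pairing X (z j) (Ssg X U f l \<delta> (v k))))))" for k
  have P0: "\<And>lam. Wh w lam \<le> \<phi> \<longleftrightarrow> lam \<le> Wres X w \<phi>"
    using Wh_le_iff[OF assms(8)] by blast
  note G0 = greatest_gen[where P="\<lambda>u. u \<le> \<phi>", OF P0]
  have v0: "v 0 = Wh w (Wres X w \<phi>)" using G0(1) assms(10) by simp
  have PS: "\<And>lam. (\<forall>j. pairing X (z j) (Wh w lam) \<le> pairing X (z j) (Ssg X U f l \<delta> (v k)))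
      \<longleftrightarrow> lam \<le> mu k" for k
    unfolding mu_def le_fun_def pairing_Wh_le by (simp add: Min_ge_iff) blast
  note GS = greatest_gen[OF PS]
  have vS: "v (Suc k) = Wh w (mu k)" if "k < N" for k using GS(1)[of k] assms(11) that by simp
  have A: "\<forall>k\<le>N. \<exists>lam. v k = Wh w lam \<and> (\<forall>lam'. v k = Wh w lam' \<longrightarrow> lam' \<le> lam)"
  proof (intro allI impI)
    fix k assume "k \<le> N"
    show "\<exists>lam. v k = Wh w lam \<and> (\<forall>lam'. v k = Wh w lam' \<longrightarrow> lam' \<le> lam)"
    proof (cases k)
      case 0
      have e: "v k = Wh w (Wres X w \<phi>)" using 0 v0 by simp
      show ?thesis unfolding e by (intro exI[of _ "Wres X w \<phi>"] conjI refl) (rule G0(3))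
    next
      case (Suc k')
      have "k' < N" using Suc \<open>k \<le> N\<close> by simp
      then show ?thesis unfolding Suc vS[OF \<open>k' < N\<close>] by (intro exI[of _ "mu k'"] conjI refl) (rule GS(3))
    qed
  qed
  have B: "Wh w (GREATEST lam. v k = Wh w lam) = v k" if kN: "k < N" for k
  proof -
    obtain lam where "v k = Wh w lam" "\<forall>lam'. v k = Wh w lam' \<longrightarrow> lam' \<le> lam"
      using A[rule_format, OF less_imp_le[OF kN]] by (elim exE conjE)
    note h = this
    have "(GREATEST lam. v k = Wh w lam) = lam" by (rule Greatest_equality) (use h in auto)
    then show ?thesis using h(1) by simp
  qed
  show ?thesis
  proof (intro conjI A allI impI)
    show "(GREATEST lam. v 0 = Wh w lam) = Wres X w \<phi>" using v0 G0(2) by simp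
  next
    fix k i assume "k < N"
    show "(GREATEST lam. v (Suc k) = Wh w lam) i =
          Min (range (\<lambda>j. resid (pairing X (z j) (w i))
                 (pairing X (z j) (Ssg X U f l \<delta> (Wh w (GREATEST lam. v k = Wh w lam))))))"
    proof -
      have "(GREATEST lam. v (Suc k) = Wh w lam) = mu k"
        unfolding vS[OF \<open>k < N\<close>] by (rule GS(2))
      then show ?thesis unfolding B[OF \<open>k < N\<close>] mu_def by (rule fun_cong)
    qed
  qed
qed
end
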